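(* Let $X$ be a completely metrizable space with the $\overline{DD}^{\{0,0\}}$-property. Then $X\in AP(1,0)$.
   Context: All spaces are metrizable and maps continuous. For an open cover $\mathcal U$ of $M$, maps $f,f'\colon Z\to M$ are $\mathcal U$-homotopic if there is a homotopy $h\colon Z\times[0,1]\to M$ from $f$ to $f'$ such that each path $h(\{z\}\times[0,1])$ lies in some member of $\mathcal U$. $M$ has the $\overline{DD}^{\{n,k\}}$-property if for every open cover $\mathcal U$ of $M$ and maps $f\colon\mathbb I^n\to M$, $g\colon\mathbb I^k\to M$ there exist maps $f'\colon \mathbb I^n\to M$, $g'\colon\mathbb I^k\to M$, $\mathcal U$-homotopic to $f$ and $g$ respectively, with $f'(\mathbb I^n)\cap g'(\mathbb I^k)=\emptyset$ (here $\mathbb I^0$ is a point). A map is $0$-dimensional if all fibers have dimension $\le0$. $X\in AP(1,0)$ means: for every $\varepsilon>0$ and map $g\colon\mathbb I\to X$ there is a $0$-dimensional map $g'\colon\mathbb I\to X$ connected to $g$ by a homotopy $h$ with $\mathrm{diam}\,h(\{t\}\times[0,1])<\varepsilon$ for all $t$ (w.r.t. a compatible metric). *)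

theory Defs
  imports "HOL-Analysis.Analysis"
begin

text \<open>The cube I^n as a topological space (I^0 is a one-point space).\<close>
definition cube_top :: "nat \<Rightarrow> (nat \<Rightarrow> real) topology" where
  "cube_top n = subtopology (powertop_real {..<n}) (PiE {..<n} (\<lambda>_. {0..1}))"

definition U_homotopic :: "'b topology \<Rightarrow> 'a topology \<Rightarrow> 'a set set \<Rightarrow> ('b \<Rightarrow> 'a) \<Rightarrow> ('b \<Rightarrow> 'a) \<Rightarrow> bool" where
  "U_homotopic Z M \<U> f f' \<longleftrightarrow>
     (\<exists>h. continuous_map (prod_topology Z (top_of_set {0..1::real})) M h \<and>
          (\<forall>z\<in>topspace Z. h (z, 0) = f z \<and> h (z, 1) = f' z) \<and>
          (\<forall>z\<in>topspace Z. \<exists>W\<in>\<U>. (\<lambda>t::real. h (z, t)) ` {0..1} \<subseteq> W))"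

definition open_cover :: "'a topology \<Rightarrow> 'a set set \<Rightarrow> bool" where
  "open_cover M \<U> \<longleftrightarrow> (\<forall>W\<in>\<U>. openin M W) \<and> \<Union>\<U> = topspace M"

definition DD_property :: "'a topology \<Rightarrow> nat \<Rightarrow> nat \<Rightarrow> bool" where
  "DD_property M n k \<longleftrightarrow>
     (\<forall>\<U> f g. open_cover M \<U> \<and> continuous_map (cube_top n) M f \<and> continuous_map (cube_top k) M g \<longrightarrow>
        (\<exists>f' g'. continuous_map (cube_top n) M f' \<and> continuous_map (cube_top k) M g' \<and>
           U_homotopic (cube_top n) M \<U> f f' \<and> U_homotopic (cube_top k) M \<U> g g' \<and>
           f' ` topspace (cube_top n) \<inter> g' ` topspace (cube_top k) = {}))"

definition zero_dim_map :: "'b topology \<Rightarrow> ('b \<Rightarrow> 'a) \<Rightarrow> bool" where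
  "zero_dim_map Z g \<longleftrightarrow> (\<forall>x. subtopology Z {z \<in> topspace Z. g z = x} dim_le 0)"

definition mdiam :: "'a metric \<Rightarrow> 'a set \<Rightarrow> real" where
  "mdiam m S = Sup {mdist m x y | x y. x \<in> S \<and> y \<in> S}"

definition AP_1_0 :: "'a metric \<Rightarrow> bool" where
  "AP_1_0 m \<longleftrightarrow>
     (\<forall>\<epsilon>>0. \<forall>g. continuous_map (top_of_set {0..1::real}) (mtopology_of m) g \<longrightarrow>
        (\<exists>g' h. continuous_map (top_of_set {0..1::real}) (mtopology_of m) g' \<and>
               zero_dim_map (top_of_set {0..1::real}) g' \<and>
               continuous_map (prod_topology (top_of_set {0..1::real}) (top_of_set {0..1::real})) (mtopology_of m) h \<and>
               (\<forall>t\<in>{0..1}. h (t, 0) = g t \<and> h (t, 1) = g' t) \<and>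
               (\<forall>t\<in>{0..1}. mdiam m ((\<lambda>s. h (t, s)) ` {0..1}) < \<epsilon>)))"

end

theory Submission imports Defs begin

lemma topspace_cube0: "topspace (cube_top 0) = {(\<lambda>_. undefined)}"
  by (simp add: cube_top_def PiE_empty_domain)

lemma openin_mball_of: "openin (mtopology_of m) (mball_of m y r)"
  by (simp add: mtopology_of_def mball_of_def Metric_space.openin_mball)

lemma DD_path:
  assumes DD: "DD_property X 0 0" and X1: "mtopology_of m1 = X" and X2: "mtopology_of m2 = X"
    and x: "x \<in> topspace X" and r: "r > 0"
  shows "\<exists>\<alpha>. continuous_map (top_of_set {0..1::real}) X \<alpha> \<and> \<alpha> 0 = x \<and> \<alpha> 1 \<noteq> x \<and>
     (\<forall>u\<in>{0..1}. mdist m1 (\<alpha> u) x < r \<and> mdist m2 (\<alpha> u) x < r)"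
proof -
  define U where "U = {mball_of m1 y (r/2) \<inter> mball_of m2 y (r/2) | y. y \<in> topspace X}"
  have sp1: "mspace m1 = topspace X" using X1 by auto
  have sp2: "mspace m2 = topspace X" using X2 by auto
  have oc: "open_cover X U"
    unfolding open_cover_def
  proof
    show "\<forall>W\<in>U. openin X W"
    proof
      fix W assume "W \<in> U"
      then obtain y where "W = mball_of m1 y (r/2) \<inter> mball_of m2 y (r/2)" unfolding U_def by blast
      then show "openin X W" using openin_mball_of[of m1 y "r/2"] openin_mball_of[of m2 y "r/2"]
        by (simp add: X1 X2 openin_Int)
    qed
    show "\<Union>U = topspace X"
    proof
      show "\<Union>U \<subseteq> topspace X" unfolding U_def using sp1 sp2 by auto
      show "topspace X \<subseteq> \<Union>U"
      proof
        fix z assume z: "z \<in> topspace X"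
        have "mdist m1 z z = 0" "mdist m2 z z = 0" using z sp1 sp2 mdist_zero by auto
        then have "z \<in> mball_of m1 z (r/2) \<inter> mball_of m2 z (r/2)" using sp1 sp2 r z by (simp del: mdist_zero)
        then show "z \<in> \<Union>U" unfolding U_def using z by blast
      qed
    qed
  qed
  define pt where "pt = (\<lambda>_::nat. undefined::real)"
  have tp: "topspace (cube_top 0) = {pt}" by (simp add: topspace_cube0 pt_def)
  have cc: "continuous_map (cube_top 0) X (\<lambda>_. x)" using x by simp
  obtain f' g' where cf: "continuous_map (cube_top 0) X f'" and cg: "continuous_map (cube_top 0) X g'"
    and hf: "U_homotopic (cube_top 0) X U (\<lambda>_. x) f'" and hg: "U_homotopic (cube_top 0) X U (\<lambda>_. x) g'"
    and dj: "f' ` topspace (cube_top 0) \<inter> g' ` topspace (cube_top 0) = {}"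
    using DD oc cc unfolding DD_property_def by blast
  have ne: "f' pt \<noteq> g' pt" using dj tp by auto
  have main: "\<exists>\<alpha>. continuous_map (top_of_set {0..1::real}) X \<alpha> \<and> \<alpha> 0 = x \<and> \<alpha> 1 = k pt \<and>
     (\<forall>u\<in>{0..1}. mdist m1 (\<alpha> u) x < r \<and> mdist m2 (\<alpha> u) x < r)"
    if hk: "U_homotopic (cube_top 0) X U (\<lambda>_. x) k" for k
  proof -
    obtain h where hc: "continuous_map (prod_topology (cube_top 0) (top_of_set {0..1::real})) X h"
      and h01: "\<forall>z\<in>topspace (cube_top 0). h (z, 0) = x \<and> h (z, 1) = k z"
      and hW: "\<forall>z\<in>topspace (cube_top 0). \<exists>W\<in>U. (\<lambda>t::real. h (z, t)) ` {0..1} \<subseteq> W"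
      using hk unfolding U_homotopic_def by blast
    define \<alpha> where "\<alpha> = (\<lambda>t. h (pt, t))"
    have ca: "continuous_map (top_of_set {0..1::real}) X \<alpha>"
      unfolding \<alpha>_def
      by (rule continuous_map_compose[OF _ hc, unfolded o_def]) (auto intro!: continuous_map_pairedI simp: tp)
    obtain W where W: "W \<in> U" "\<alpha> ` {0..1} \<subseteq> W" using hW tp \<alpha>_def by auto
    then obtain y where y: "y \<in> topspace X" "W = mball_of m1 y (r/2) \<inter> mball_of m2 y (r/2)"
      unfolding U_def by blast
    have a0: "\<alpha> 0 = x" using h01 tp \<alpha>_def by auto
    have "mdist m1 (\<alpha> u) x < r \<and> mdist m2 (\<alpha> u) x < r" if u: "u \<in> {0..1}" for u
    proof -
      have "\<alpha> u \<in> W" "\<alpha> 0 \<in> W" using W u by auto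
      then have A: "mdist m1 y (\<alpha> u) < r/2" "mdist m1 y x < r/2" "mdist m2 y (\<alpha> u) < r/2" "mdist m2 y x < r/2"
        "\<alpha> u \<in> topspace X" "x \<in> topspace X" using y a0 sp1 by auto
      have "mdist m1 (\<alpha> u) x \<le> mdist m1 (\<alpha> u) y + mdist m1 y x"
        using A y sp1 by (intro mdist_triangle) auto
      moreover have "mdist m2 (\<alpha> u) x \<le> mdist m2 (\<alpha> u) y + mdist m2 y x"
        using A y sp2 by (intro mdist_triangle) auto
      ultimately show ?thesis using A by (simp add: mdist_commute)
    qed
    then show ?thesis using ca a0 h01 tp \<alpha>_def by auto
  qed
  show ?thesis
  proof (cases "f' pt = x")
    case True
    then have "g' pt \<noteq> x" using ne by auto
    then show ?thesis using main[OF hg] by metis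
  next
    case False
    then show ?thesis using main[OF hf] by metis
  qed
qed

lemma mdist_self [simp]: "x \<in> mspace m \<Longrightarrow> mdist m x x = 0"
  by simp

lemma cm_comp_real:
  assumes "continuous_on S \<phi>" "\<phi> ` S \<subseteq> T" "continuous_map (top_of_set T) X \<alpha>"
  shows "continuous_map (top_of_set S) X (\<lambda>z. \<alpha> (\<phi> z))"
proof -
  have "continuous_map (top_of_set S) (top_of_set T) \<phi>"
    using assms(1,2) unfolding continuous_map_in_subtopology by (auto simp: image_subset_iff)
  from continuous_map_compose[OF this assms(3)] show ?thesis by (simp add: o_def)
qed

lemma step_mod:
  assumes DD: "DD_property X 0 0" and X1: "mtopology_of m1 = X" and X2: "mtopology_of m2 = X"
    and f: "continuous_map (top_of_set {0..1::real}) X f"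
    and pq: "0 \<le> p" "p < q" "q \<le> 1" and c: "c > 0"
  shows "\<exists>f' K. continuous_map (top_of_set {0..1::real}) X f' \<and>
      continuous_map (prod_topology (top_of_set {0..1::real}) (top_of_set {0..1::real})) X K \<and>
      (\<forall>t\<in>{0..1}. K (t,0) = f t \<and> K (t,1) = f' t) \<and>
      (\<forall>t\<in>{0..1}. \<forall>s\<in>{0..1}. mdist m1 (K (t,s)) (f t) < c \<and> mdist m2 (K (t,s)) (f t) < c) \<and>
      (\<exists>u\<in>{p..q}. \<exists>v\<in>{p..q}. f' u \<noteq> f' v)"
proof -
  have sp1: "mspace m1 = topspace X" using X1 by auto
  have sp2: "mspace m2 = topspace X" using X2 by auto
  have fX: "f t \<in> topspace X" if "t \<in> {0..1}" for t
    using f that by (auto simp: continuous_map_def)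
  have P: "prod_topology (top_of_set {0..1::real}) (top_of_set {0..1::real}) = top_of_set ({0..1}\<times>{0..1})"
    by simp
  show ?thesis
  proof (cases "\<exists>u\<in>{p..q}. \<exists>v\<in>{p..q}. f u \<noteq> f v")
    case True
    have K: "continuous_map (top_of_set ({0..1::real}\<times>{0..1::real})) X (\<lambda>z. f (fst z))"
      by (rule cm_comp_real[OF _ _ f]) (auto intro: continuous_intros)
    show ?thesis
    proof (intro exI conjI)
      show "continuous_map (prod_topology (top_of_set {0..1::real}) (top_of_set {0..1::real})) X (\<lambda>z. f (fst z))"
        using K by (simp only: P)
      show "\<forall>t\<in>{0..1}. \<forall>s\<in>{0..1}. mdist m1 ((\<lambda>z. f (fst z)) (t,s)) (f t) < c \<and> mdist m2 ((\<lambda>z. f (fst z)) (t,s)) (f t) < c"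
        using fX sp1 sp2 c by simp
    qed (use True f in auto)
  next
    case False
    define x where "x = f p"
    have pp: "p \<in> {p..q}" using pq by auto
    have fx: "f u = x" if "u \<in> {p..q}" for u using False that pp unfolding x_def by blast
    have x: "x \<in> topspace X" using fX pq unfolding x_def by auto
    obtain \<alpha> where ca: "continuous_map (top_of_set {0..1::real}) X \<alpha>" and a0: "\<alpha> 0 = x"
      and a1: "\<alpha> 1 \<noteq> x" and ad: "\<forall>u\<in>{0..1}. mdist m1 (\<alpha> u) x < c \<and> mdist m2 (\<alpha> u) x < c"
      using DD_path[OF DD X1 X2 x c] by blast
    define K where "K = (\<lambda>z::real\<times>real. if \<bar>2 * fst z - p - q\<bar> \<le> q - p
          then \<alpha> (snd z * (1 - \<bar>2 * fst z - p - q\<bar> / (q - p))) else f (fst z))"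
    have Kc: "continuous_map (top_of_set ({0..1::real}\<times>{0..1::real})) X K"
      unfolding K_def
    proof (rule continuous_map_cases_le)
      show "continuous_map (top_of_set ({0..1::real}\<times>{0..1::real})) euclideanreal (\<lambda>z. \<bar>2 * fst z - p - q\<bar>)"
        unfolding continuous_map_iff_continuous by (intro continuous_intros)
      show "continuous_map (top_of_set ({0..1::real}\<times>{0..1::real})) euclideanreal (\<lambda>z. q - p)"
        unfolding continuous_map_iff_continuous by (intro continuous_intros)
      have e1: "subtopology (top_of_set ({0..1::real}\<times>{0..1::real}))
          {z \<in> topspace (top_of_set ({0..1::real}\<times>{0..1::real})). \<bar>2 * fst z - p - q\<bar> \<le> q - p}
        = top_of_set {z \<in> {0..1}\<times>{0..1}. \<bar>2 * fst z - p - q\<bar> \<le> q - p}"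
        by (simp add: subtopology_subtopology Int_absorb1 subset_eq)
      have "continuous_map (top_of_set {z \<in> {0..1::real}\<times>{0..1::real}. \<bar>2 * fst z - p - q\<bar> \<le> q - p}) X
         (\<lambda>z. \<alpha> (snd z * (1 - \<bar>2 * fst z - p - q\<bar> / (q - p))))"
      proof (rule cm_comp_real[OF _ _ ca])
        show "continuous_on {z \<in> {0..1::real}\<times>{0..1::real}. \<bar>2 * fst z - p - q\<bar> \<le> q - p}
            (\<lambda>z. snd z * (1 - \<bar>2 * fst z - p - q\<bar> / (q - p)))"
          using pq by (intro continuous_intros) auto
        show "(\<lambda>z. snd z * (1 - \<bar>2 * fst z - p - q\<bar> / (q - p))) `
            {z \<in> {0..1::real}\<times>{0..1::real}. \<bar>2 * fst z - p - q\<bar> \<le> q - p} \<subseteq> {0..1}"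
        proof clarsimp
          fix a b :: real assume ab: "0 \<le> a" "a \<le> 1" "0 \<le> b" "b \<le> 1" "\<bar>2 * a - p - q\<bar> \<le> q - p"
          have "0 \<le> 1 - \<bar>2 * a - p - q\<bar> / (q - p)" "1 - \<bar>2 * a - p - q\<bar> / (q - p) \<le> 1"
            using ab pq by (auto simp: field_simps)
          then show "0 \<le> b * (1 - \<bar>2 * a - p - q\<bar> / (q - p)) \<and> b * (1 - \<bar>2 * a - p - q\<bar> / (q - p)) \<le> 1"
            using ab by (simp add: mult_le_one)
        qed
      qed
      then show "continuous_map (subtopology (top_of_set ({0..1::real}\<times>{0..1::real}))
          {z \<in> topspace (top_of_set ({0..1::real}\<times>{0..1::real})). \<bar>2 * fst z - p - q\<bar> \<le> q - p}) X
         (\<lambda>z. \<alpha> (snd z * (1 - \<bar>2 * fst z - p - q\<bar> / (q - p))))"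
        by (simp only: e1)
      have "continuous_map (top_of_set ({0..1::real}\<times>{0..1::real})) X (\<lambda>z. f (fst z))"
        by (rule cm_comp_real[OF _ _ f]) (auto intro: continuous_intros)
      then show "continuous_map (subtopology (top_of_set ({0..1::real}\<times>{0..1::real}))
          {z \<in> topspace (top_of_set ({0..1::real}\<times>{0..1::real})). q - p \<le> \<bar>2 * fst z - p - q\<bar>}) X
         (\<lambda>z. f (fst z))"
        by (rule continuous_map_from_subtopology)
      fix z :: "real\<times>real"
      assume "z \<in> topspace (top_of_set ({0..1::real}\<times>{0..1::real}))" "\<bar>2 * fst z - p - q\<bar> = q - p"
      then have "fst z \<in> {p..q}" using pq by auto
      then show "\<alpha> (snd z * (1 - \<bar>2 * fst z - p - q\<bar> / (q - p))) = f (fst z)"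
        using \<open>\<bar>2 * fst z - p - q\<bar> = q - p\<close> pq a0 fx by simp
    qed
    define f' where "f' = (\<lambda>t. K (t, 1))"
    have cf': "continuous_map (top_of_set {0..1::real}) X f'"
      unfolding f'_def
      by (rule cm_comp_real[OF _ _ Kc]) (auto intro: continuous_intros)
    have K0: "K (t,0) = f t" if "t \<in> {0..1}" for t
    proof (cases "\<bar>2 * t - p - q\<bar> \<le> q - p")
      case True
      then have "t \<in> {p..q}" by auto
      then show ?thesis using True a0 fx by (simp add: K_def)
    qed (simp add: K_def)
    have Kd: "mdist m1 (K (t,s)) (f t) < c \<and> mdist m2 (K (t,s)) (f t) < c" if "t \<in> {0..1}" "s \<in> {0..1}" for t s
    proof (cases "\<bar>2 * t - p - q\<bar> \<le> q - p")
      case True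
      then have t: "t \<in> {p..q}" by auto
      have "0 \<le> 1 - \<bar>2 * t - p - q\<bar> / (q - p)" "1 - \<bar>2 * t - p - q\<bar> / (q - p) \<le> 1"
        using True pq by (auto simp: field_simps)
      then have "s * (1 - \<bar>2 * t - p - q\<bar> / (q - p)) \<in> {0..1}" using that by (simp add: mult_le_one)
      then show ?thesis using True t ad fx by (simp add: K_def)
    next
      case False
      then show ?thesis using fX[OF that(1)] sp1 sp2 c by (simp add: K_def)
    qed
    have "f' p = x" using a0 pq by (simp add: f'_def K_def)
    moreover have "f' ((p+q)/2) = \<alpha> 1"
    proof -
      have "2 * ((p+q)/2) - p - q = 0" by (simp add: field_simps)
      then show ?thesis using pq by (simp add: f'_def K_def)
    qed
    moreover have "(p+q)/2 \<in> {p..q}" "p \<in> {p..q}" using pq by auto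
    ultimately have "\<exists>u\<in>{p..q}. \<exists>v\<in>{p..q}. f' u \<noteq> f' v" using a1
      by metis
    then show ?thesis
      apply (rule_tac exI[of _ f'], rule_tac exI[of _ K])
      using cf' Kc K0 Kd by (auto simp: P f'_def)
  qed
qed


lemma gap_below:
  assumes ni: "\<forall>a b. 0 \<le> a \<and> a < b \<and> b \<le> 1 \<longrightarrow> (\<exists>u\<in>{a..b}. \<exists>v\<in>{a..b}. f u \<noteq> f v)"
    and S: "S = {z \<in> {0..1::real}. f z = x}" and aS: "a \<in> S" and r: "r > 0"
  shows "\<exists>u. a - r < u \<and> u < a \<and> u \<notin> S"
proof (cases "a - r/2 \<in> S")
  case False
  then show ?thesis using r by (intro exI[of _ "a - r/2"]) auto
next
  case True
  then have c01: "0 \<le> a - r/2" "a \<le> 1" using S aS by auto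
  moreover have "a - r/2 < a" using r by simp
  ultimately obtain u v where uv: "u \<in> {a - r/2..a}" "v \<in> {a - r/2..a}" "f u \<noteq> f v"
    using ni by blast
  then have "f u \<noteq> x \<or> f v \<noteq> x" by auto
  then obtain w where w: "w \<in> {a - r/2..a}" "f w \<noteq> x" using uv by blast
  then have "w \<notin> S" using S by auto
  moreover have "w \<noteq> a" using w aS S by auto
  ultimately show ?thesis using w r by (intro exI[of _ w]) auto
qed

lemma gap_above:
  assumes ni: "\<forall>a b. 0 \<le> a \<and> a < b \<and> b \<le> 1 \<longrightarrow> (\<exists>u\<in>{a..b}. \<exists>v\<in>{a..b}. f u \<noteq> f v)"
    and S: "S = {z \<in> {0..1::real}. f z = x}" and aS: "a \<in> S" and r: "r > 0"
  shows "\<exists>u. a < u \<and> u < a + r \<and> u \<notin> S"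
proof (cases "a + r/2 \<in> S")
  case False
  then show ?thesis using r by (intro exI[of _ "a + r/2"]) auto
next
  case True
  then have c01: "a + r/2 \<le> 1" "0 \<le> a" using S aS by auto
  moreover have "a < a + r/2" using r by simp
  ultimately obtain u v where uv: "u \<in> {a..a + r/2}" "v \<in> {a..a + r/2}" "f u \<noteq> f v"
    using ni by blast
  then have "f u \<noteq> x \<or> f v \<noteq> x" by auto
  then obtain w where w: "w \<in> {a..a + r/2}" "f w \<noteq> x" using uv by blast
  then have "w \<notin> S" using S by auto
  moreover have "w \<noteq> a" using w aS S by auto
  ultimately show ?thesis using w r by (intro exI[of _ w]) auto
qed

lemma zero_dim_from_intervals:
  assumes ni: "\<forall>a b. 0 \<le> a \<and> a < b \<and> b \<le> 1 \<longrightarrow> (\<exists>u\<in>{a..b}. \<exists>v\<in>{a..b}. f u \<noteq> f v)"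
  shows "zero_dim_map (top_of_set {0..1::real}) f"
  unfolding zero_dim_map_def
proof
  fix x
  define S where "S = {z \<in> {0..1::real}. f z = x}"
  have eq: "subtopology (top_of_set {0..1::real}) {z \<in> topspace (top_of_set {0..1::real}). f z = x} = top_of_set S"
    unfolding S_def by (simp add: subtopology_subtopology Int_absorb1 subset_eq)
  have "top_of_set S dim_le 0"
    unfolding dimension_le_0_neighbourhood_base_of_clopen
  proof (subst open_neighbourhood_base_of, blast, intro allI impI)
    fix W a assume Wa: "openin (top_of_set S) W \<and> a \<in> W"
    then obtain Ob where Ob: "open Ob" "W = S \<inter> Ob" by (auto simp: openin_open)
    then obtain r where r: "r > 0" "ball a r \<subseteq> Ob" using Wa Ob open_contains_ball by blast
    have aS: "a \<in> S" using Wa Ob by auto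
    obtain u where u: "a - r < u" "u < a" "u \<notin> S" using gap_below[OF ni S_def aS r(1)] by blast
    obtain v where v: "a < v" "v < a + r" "v \<notin> S" using gap_above[OF ni S_def aS r(1)] by blast
    have e: "S \<inter> {u<..<v} = S \<inter> {u..v}" using u v by (auto simp: less_eq_real_def)
    show "\<exists>U. (closedin (top_of_set S) U \<and> openin (top_of_set S) U) \<and> a \<in> U \<and> U \<subseteq> W"
    proof (intro exI conjI)
      show "closedin (top_of_set S) (S \<inter> {u<..<v})" unfolding e
        by (simp add: closedin_closed_Int)
      show "openin (top_of_set S) (S \<inter> {u<..<v})"
        by (simp add: openin_open_Int)
      show "a \<in> S \<inter> {u<..<v}" using aS u v by auto
      have "{u<..<v} \<subseteq> ball a r" using u v by (auto simp: dist_real_def)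
      then show "S \<inter> {u<..<v} \<subseteq> W" using r Ob by auto
    qed
  qed
  then show "subtopology (top_of_set {0..1::real}) {z \<in> topspace (top_of_set {0..1::real}). f z = x} dim_le 0"
    by (simp only: eq)
qed

definition Jp :: "nat \<Rightarrow> real" where
  "Jp k = real (min (fst (prod_decode k)) (snd (prod_decode k))) / real (snd (prod_decode k) + 1)"
definition Jq :: "nat \<Rightarrow> real" where
  "Jq k = (real (min (fst (prod_decode k)) (snd (prod_decode k))) + 1) / real (snd (prod_decode k) + 1)"

lemma J_bounds: "0 \<le> Jp k" "Jp k < Jq k" "Jq k \<le> 1"
proof -
  obtain i n where d: "prod_decode k = (i,n)" by (cases "prod_decode k")
  have "real (min i n) + 1 \<le> real n + 1" by simp
  then show "0 \<le> Jp k" "Jp k < Jq k" "Jq k \<le> 1"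
    unfolding Jp_def Jq_def d by (auto simp: divide_simps)
qed

lemma J_inside:
  assumes "0 \<le> a" "a < b" "b \<le> 1"
  shows "\<exists>k. a \<le> Jp k \<and> Jq k \<le> b"
proof -
  obtain n :: nat where n: "2 / (b - a) < real n" using reals_Archimedean2 by blast
  have n1: "2 < (b - a) * real n" using n assms by (simp add: field_simps)
  define N where "N = real n + 1"
  have N: "2 < (b - a) * N" "N > 0" using n1 assms unfolding N_def by (auto simp: algebra_simps)
  define i where "i = nat \<lceil>a * N\<rceil>"
  have i1: "a * N \<le> real i" unfolding i_def by linarith
  have i2: "real i < a * N + 1" unfolding i_def using assms N by (simp add: of_nat_nat) linarith
  have "real i + 1 < b * N" using i2 N by (simp add: algebra_simps)
  also have "\<dots> \<le> N" using assms N by simp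
  finally have "real i < real n" unfolding N_def by simp
  then have mi: "min i n = i" by simp
  define k where "k = prod_encode (i, n)"
  have d: "prod_decode k = (i, n)" by (simp add: k_def)
  have "a \<le> Jp k" unfolding Jp_def d using i1 N by (simp add: mi field_simps N_def)
  moreover have "Jq k \<le> b" unfolding Jq_def d using \<open>real i + 1 < b * N\<close> N
    by (simp add: mi field_simps N_def)
  ultimately show ?thesis by blast
qed

lemma pow_arith1: "(2::real)^(Suc N) * ((1 - 1/2^N) - 1) + 2 = 0"
  by (simp add: field_simps)
lemma pow_arith2: "1 - 1/2^(Suc N) \<le> s \<Longrightarrow> 1 \<le> (2::real)^(Suc N)*(s - 1) + 2"
proof -
  assume a: "1 - 1/2^(Suc N) \<le> s"
  have "(2::real)^(Suc N) * (-(1/2^(Suc N))) \<le> 2^(Suc N)*(s - 1)"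
    using a by (intro mult_left_mono) auto
  then show ?thesis by simp
qed
lemma pow_arith3: "1 - 1/2^N \<le> s \<Longrightarrow> 0 \<le> (2::real)^(Suc N)*(s - 1) + 2"
proof -
  assume a: "1 - 1/2^N \<le> s"
  have "(2::real)^(Suc N) * (-(1/2^N)) \<le> 2^(Suc N)*(s - 1)"
    using a by (intro mult_left_mono) auto
  moreover have "(2::real)^(Suc N) * (-(1/2^N)) = -2" by simp
  ultimately show ?thesis by linarith
qed
lemma pow_arith4: "1 - 1/2^N < 1 - 1/(2::real)^(Suc N)"
  by (simp add: field_simps)
lemma pow_arith5: "N \<le> M \<Longrightarrow> 1 - 1/2^N \<le> 1 - 1/(2::real)^M"
  by (simp add: field_simps)
lemma pow_ex: "(s::real) < 1 \<Longrightarrow> \<exists>N. s \<le> 1 - 1/2^N"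
proof -
  assume "s < 1"
  then obtain N where "(1/2::real)^N < 1 - s" using real_arch_pow_inv[of "1 - s" "1/2"] by auto
  then show ?thesis by (intro exI[of _ N]) (simp add: power_one_over)
qed
lemma pow_small: "b > 0 \<Longrightarrow> e > 0 \<Longrightarrow> \<exists>N. (b::real) / 2^N < e"
proof -
  assume "b > 0" "e > 0"
  then obtain N where "(1/2::real)^N < e / b" using real_arch_pow_inv[of "e/b" "1/2"] by auto
  then show ?thesis using \<open>b > 0\<close> by (intro exI[of _ N]) (simp add: power_one_over field_simps)
qed

lemma main_construction:
  fixes m1 m2 :: "'a metric" and g :: "real \<Rightarrow> 'a"
  assumes DD: "DD_property X 0 0" and X1: "mtopology_of m1 = X" and X2: "mtopology_of m2 = X"
    and comp: "mcomplete_of m2"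
    and g: "continuous_map (top_of_set {0..1::real}) X g" and b0: "b0 > 0"
  shows "\<exists>g' H. continuous_map (top_of_set {0..1::real}) X g' \<and> zero_dim_map (top_of_set {0..1::real}) g' \<and>
     continuous_map (prod_topology (top_of_set {0..1::real}) (top_of_set {0..1::real})) X H \<and>
     (\<forall>t\<in>{0..1}. H (t,0) = g t \<and> H (t,1) = g' t) \<and>
     (\<forall>t\<in>{0..1}. \<forall>s\<in>{0..1}. mdist m1 (H (t,s)) (g t) \<le> b0)"
proof -
  define I where "I = top_of_set {0..1::real}"
  define D where "D = {0..1::real} \<times> {0..1::real}"
  have PI: "prod_topology I I = top_of_set D" by (simp add: I_def D_def)
  have sp1: "mspace m1 = topspace X" using X1 by auto
  have sp2: "mspace m2 = topspace X" using X2 by auto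
  define Q where "Q = (\<lambda>k f b f' K \<delta>. continuous_map I X f' \<and> continuous_map (top_of_set D) X K \<and>
      (\<forall>t\<in>{0..1}. K (t,0) = f t \<and> K (t,1) = f' t) \<and>
      (\<forall>t\<in>{0..1}. \<forall>s\<in>{0..1}. mdist m1 (K (t,s)) (f t) < b/2 \<and> mdist m2 (K (t,s)) (f t) < b/2) \<and>
      \<delta> > 0 \<and> (\<exists>u\<in>{Jp k..Jq k}. \<exists>v\<in>{Jp k..Jq k}. \<delta> \<le> mdist m2 (f' u) (f' v)))"
  have Qex: "\<exists>z. Q k f b (fst z) (fst (snd z)) (snd (snd z))"
    if f: "continuous_map I X f" and b: "b > 0" for k f b
  proof -
    have hb: "b/2 > 0" using b by simp
    obtain f' K where f': "continuous_map I X f'" and K: "continuous_map (top_of_set D) X K"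
      and K01: "\<forall>t\<in>{0..1}. K (t,0) = f t \<and> K (t,1) = f' t"
      and Kd: "\<forall>t\<in>{0..1}. \<forall>s\<in>{0..1}. mdist m1 (K (t,s)) (f t) < b/2 \<and> mdist m2 (K (t,s)) (f t) < b/2"
      and uv: "\<exists>u\<in>{Jp k..Jq k}. \<exists>v\<in>{Jp k..Jq k}. f' u \<noteq> f' v"
      using step_mod[OF DD X1 X2 f[unfolded I_def] J_bounds[of k] hb] unfolding I_def PI[unfolded I_def]
      by blast
    then obtain u v where u: "u \<in> {Jp k..Jq k}" and v: "v \<in> {Jp k..Jq k}" and ne: "f' u \<noteq> f' v" by blast
    have "u \<in> {0..1}" "v \<in> {0..1}" using u v J_bounds[of k] by auto
    then have "f' u \<in> mspace m2" "f' v \<in> mspace m2" using f' sp2 by (auto simp: I_def continuous_map_def)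
    then have "mdist m2 (f' u) (f' v) > 0" using ne mdist_nonneg[of m2 "f' u" "f' v"] mdist_zero[of "f' u" m2 "f' v"]
      by linarith
    then have "Q k f b f' K (mdist m2 (f' u) (f' v))"
      unfolding Q_def using f' K K01 Kd u v by blast
    then show ?thesis by (intro exI[of _ "(f', K, mdist m2 (f' u) (f' v))"]) simp
  qed
  define nxt where "nxt = (\<lambda>k f b. SOME z. Q k f b (fst z) (fst (snd z)) (snd (snd z)))"
  have nxtQ: "Q k f b (fst (nxt k f b)) (fst (snd (nxt k f b))) (snd (snd (nxt k f b)))"
    if "continuous_map I X f" "b > 0" for k f b
    unfolding nxt_def using someI_ex[OF Qex[OF that]] .
  define st where "st = rec_nat (g, b0) (\<lambda>k sb. (fst (nxt k (fst sb) (snd sb)),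
       min (snd sb / 2) (snd (snd (nxt k (fst sb) (snd sb))) / 4)))"
  define fs where "fs k = fst (st k)" for k
  define bs where "bs k = snd (st k)" for k
  define Ks where "Ks k = fst (snd (nxt k (fs k) (bs k)))" for k
  define ds where "ds k = snd (snd (nxt k (fs k) (bs k)))" for k
  have fs0: "fs 0 = g" and bs0: "bs 0 = b0" by (simp_all add: fs_def bs_def st_def)
  have fsS: "fs (Suc k) = fst (nxt k (fs k) (bs k))" for k by (simp add: fs_def bs_def st_def)
  have bsS: "bs (Suc k) = min (bs k / 2) (ds k / 4)" for k by (simp add: fs_def bs_def st_def ds_def)
  have inv: "continuous_map I X (fs k) \<and> bs k > 0" for k
  proof (induction k)
    case 0
    then show ?case using g b0 by (simp add: fs0 bs0 I_def)
  next
    case (Suc k)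
    then have "Q k (fs k) (bs k) (fs (Suc k)) (Ks k) (ds k)"
      using nxtQ[of "fs k" "bs k" k] by (simp add: fsS Ks_def ds_def)
    then show ?case using Suc by (simp add: Q_def bsS)
  qed
  have Qk: "Q k (fs k) (bs k) (fs (Suc k)) (Ks k) (ds k)" for k
    using nxtQ[of "fs k" "bs k" k] inv[of k] by (simp add: fsS Ks_def ds_def)
  have fcont: "continuous_map I X (fs k)" and bpos: "bs k > 0" for k using inv by auto
  have Kcont: "continuous_map (top_of_set D) X (Ks k)" for k using Qk[of k] by (simp add: Q_def)
  have K0: "Ks k (t,0) = fs k t" and K1: "Ks k (t,1) = fs (Suc k) t" if "t \<in> {0..1}" for k t
    using Qk[of k] that by (simp_all add: Q_def)
  have Kd12: "mdist m1 (Ks k (t,s)) (fs k t) < bs k / 2 \<and> mdist m2 (Ks k (t,s)) (fs k t) < bs k / 2"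
    if "t \<in> {0..1}" "s \<in> {0..1}" for k t s
    using Qk[of k] that unfolding Q_def by blast
  have dpos: "ds k > 0" for k using Qk[of k] by (simp add: Q_def)
  have wit: "\<exists>u\<in>{Jp k..Jq k}. \<exists>v\<in>{Jp k..Jq k}. ds k \<le> mdist m2 (fs (Suc k) u) (fs (Suc k) v)" for k
    using Qk[of k] unfolding Q_def by blast
  have fX: "fs k t \<in> topspace X" if "t \<in> {0..1}" for k t
    using fcont[of k] that by (auto simp: I_def continuous_map_def)
  have KX: "Ks k z \<in> topspace X" if "z \<in> D" for k z
    using Kcont[of k] that by (auto simp: continuous_map_def)
  have bsdec: "bs (Suc k) \<le> bs k / 2" for k by (simp add: bsS)
  have bsle: "bs (Suc k) \<le> bs k" for k using bsdec[of k] bpos[of k] by linarith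
  have bsmono: "bs n \<le> bs k" if "k \<le> n" for k n
    using that
  proof (induction n rule: dec_induct)
    case (step n) then show ?case using bsle[of n] by linarith
  qed simp
  have bsgeo: "bs k \<le> b0 / 2^k" for k
  proof (induction k)
    case (Suc k)
    have "bs (Suc k) * 2^k \<le> (bs k / 2) * 2^k" using bsdec[of k] by (intro mult_right_mono) auto
    then have "bs (Suc k) * 2^Suc k \<le> bs k * 2^k" by simp
    also have "\<dots> \<le> b0" using Suc by (simp add: field_simps)
    finally show ?case by (simp add: field_simps)
  qed (simp add: bs0)
  have bssmall: "\<exists>N. \<forall>n\<ge>N. bs n < e" if "e > 0" for e
  proof -
    obtain N where N: "b0 / 2^N < e" using pow_small[OF b0 \<open>e > 0\<close>] by blast
    have "bs n < e" if "n \<ge> N" for n using bsmono[OF that] bsgeo[of N] N by linarith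
    then show ?thesis by blast
  qed
  have spe: "mspace e = topspace X" if "e = m1 \<or> e = m2" for e using that sp1 sp2 by auto
  have Kde: "mdist e (Ks k (t,s)) (fs k t) < bs k / 2" if "e = m1 \<or> e = m2" "t \<in> {0..1}" "s \<in> {0..1}" for e k t s
    using Kd12[OF that(2,3), of k] that(1) by auto
  have fsdist: "mdist e (fs k t) (fs n t) \<le> bs k - bs n" if e: "e = m1 \<or> e = m2" and kn: "k \<le> n" and t: "t \<in> {0..1}" for e k n t
    using kn
  proof (induction n rule: dec_induct)
    case base
    then show ?case using fX[OF t, of k] spe[OF e] by simp
  next
    case (step n)
    have "mdist e (fs k t) (fs (Suc n) t) \<le> mdist e (fs k t) (fs n t) + mdist e (fs n t) (fs (Suc n) t)"
      using fX[OF t] spe[OF e] by (intro mdist_triangle) auto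
    moreover have "mdist e (fs n t) (fs (Suc n) t) < bs n / 2"
      using Kde[of e t 1 n] e t K1[OF t, of n] by (simp add: mdist_commute)
    ultimately show ?case using step.IH bsdec[of n] by linarith
  qed
  have fsdist': "mdist e (fs n t) (fs n' t) \<le> bs N" if e: "e = m1 \<or> e = m2" and "N \<le> n" "N \<le> n'" and t: "t \<in> {0..1}" for e N n n' t
  proof (cases "n \<le> n'")
    case True
    then show ?thesis using fsdist[OF e True t] bsmono[OF \<open>N \<le> n\<close>] bpos[of n'] by linarith
  next
    case False
    then have nn: "n' \<le> n" by simp
    show ?thesis using fsdist[OF e nn t] bsmono[OF \<open>N \<le> n'\<close>] bpos[of n] by (simp add: mdist_commute)
  qed
  interpret M2: Metric_space "mspace m2" "mdist m2" by simp
  have M2top: "M2.mtopology = X" using X2 by (simp add: mtopology_of_def)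
  have M2comp: "M2.mcomplete" using comp by (simp add: mcomplete_of_def)
  have lim_ex: "\<exists>l. limitin X (\<lambda>n. fs n t) l sequentially" if t: "t \<in> {0..1}" for t
  proof -
    have "\<exists>l. limitin M2.mtopology (\<lambda>n. fs n t) l sequentially"
    proof (rule M2comp[unfolded M2.mcomplete, rule_format], intro conjI allI impI)
      show "\<forall>\<^sub>F n in sequentially. fs n t \<in> mspace m2" using fX[OF t] sp2 by simp
      fix e :: real assume "e > 0"
      then obtain N where N: "\<forall>n\<ge>N. bs n < e" using bssmall by blast
      show "\<exists>N. \<forall>n n'. N \<le> n \<longrightarrow> N \<le> n' \<longrightarrow> mdist m2 (fs n t) (fs n' t) < e"
      proof (intro exI[of _ N] allI impI)
        fix n n' assume "N \<le> n" "N \<le> n'"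
        then show "mdist m2 (fs n t) (fs n' t) < e" using fsdist'[of m2 N n n' t] t N by fastforce
      qed
    qed
    then show ?thesis by (simp add: M2top)
  qed
  define finf where "finf t = (SOME l. limitin X (\<lambda>n. fs n t) l sequentially)" for t
  have finf_lim: "limitin X (\<lambda>n. fs n t) (finf t) sequentially" if "t \<in> {0..1}" for t
    unfolding finf_def using someI_ex[OF lim_ex[OF that]] .
  have finfX: "finf t \<in> topspace X" if "t \<in> {0..1}" for t
    using finf_lim[OF that] limitin_topspace by fastforce
  have finf_dist: "mdist e (fs k t) (finf t) \<le> bs k" if e: "e = m1 \<or> e = m2" and t: "t \<in> {0..1}" for e k t
  proof (rule field_le_epsilon)
    fix \<epsilon> :: real assume \<epsilon>: "\<epsilon> > 0"
    interpret E: Metric_space "mspace e" "mdist e" by simp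
    have "E.mtopology = X" using e X1 X2 by (auto simp: mtopology_of_def)
    then have "limitin E.mtopology (\<lambda>n. fs n t) (finf t) sequentially" using finf_lim[OF t] by simp
    then have "\<forall>\<^sub>F n in sequentially. fs n t \<in> mspace e \<and> mdist e (fs n t) (finf t) < \<epsilon>"
      using \<epsilon> unfolding E.limitin_metric by blast
    then obtain N where N: "\<forall>n\<ge>N. mdist e (fs n t) (finf t) < \<epsilon>" unfolding eventually_sequentially by blast
    define n where "n = max N k"
    have "mdist e (fs k t) (finf t) \<le> mdist e (fs k t) (fs n t) + mdist e (fs n t) (finf t)"
      using fX[OF t] finfX[OF t] spe[OF e] by (intro mdist_triangle) auto
    moreover have "mdist e (fs k t) (fs n t) \<le> bs k - bs n" using fsdist[OF e _ t, of k n] by (simp add: n_def)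
    moreover have "mdist e (fs n t) (finf t) < \<epsilon>" using N by (simp add: n_def)
    ultimately show "mdist e (fs k t) (finf t) \<le> bs k + \<epsilon>" using bpos[of n] by linarith
  qed
  have finf_ne: "\<exists>u\<in>{Jp k..Jq k}. \<exists>v\<in>{Jp k..Jq k}. finf u \<noteq> finf v" for k
  proof -
    obtain u v where u: "u \<in> {Jp k..Jq k}" and v: "v \<in> {Jp k..Jq k}"
      and d: "ds k \<le> mdist m2 (fs (Suc k) u) (fs (Suc k) v)" using wit[of k] by blast
    have u1: "u \<in> {0..1}" and v1: "v \<in> {0..1}" using u v J_bounds[of k] by auto
    have "finf u \<noteq> finf v"
    proof
      assume eq: "finf u = finf v"
      have "mdist m2 (fs (Suc k) u) (fs (Suc k) v) \<le> mdist m2 (fs (Suc k) u) (finf u) + mdist m2 (finf u) (fs (Suc k) v)"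
        using fX u1 v1 finfX sp2 by (intro mdist_triangle) auto
      moreover have "mdist m2 (finf u) (fs (Suc k) v) \<le> bs (Suc k)"
        using finf_dist[of m2 v "Suc k"] v1 eq by (simp add: mdist_commute)
      moreover have "mdist m2 (fs (Suc k) u) (finf u) \<le> bs (Suc k)" using finf_dist[of m2 u "Suc k"] u1 by simp
      moreover have "bs (Suc k) \<le> ds k / 4" by (simp add: bsS)
      ultimately show False using d dpos[of k] by linarith
    qed
    then show ?thesis using u v by blast
  qed
  have zd: "zero_dim_map (top_of_set {0..1::real}) finf"
  proof (rule zero_dim_from_intervals, intro allI impI)
    fix a b :: real assume ab: "0 \<le> a \<and> a < b \<and> b \<le> 1"
    then obtain k where k: "a \<le> Jp k" "Jq k \<le> b" using J_inside by blast
    then have "{Jp k..Jq k} \<subseteq> {a..b}" by auto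
    then show "\<exists>u\<in>{a..b}. \<exists>v\<in>{a..b}. finf u \<noteq> finf v" using finf_ne[of k] by blast
  qed
  define HN where "HN = rec_nat (\<lambda>z::real\<times>real. g (fst z))
     (\<lambda>N h z. if snd z \<le> 1 - 1/2^N then h z else Ks N (fst z, min 1 (2^(Suc N) * (snd z - 1) + 2)))"
  have HN0: "HN 0 = (\<lambda>z. g (fst z))" by (simp add: HN_def)
  have HNS: "HN (Suc N) = (\<lambda>z. if snd z \<le> 1 - 1/2^N then HN N z else Ks N (fst z, min 1 (2^(Suc N) * (snd z - 1) + 2)))"
    for N unfolding HN_def by simp
  have H2: "HN N z = fs N (fst z)" if "z \<in> D" "1 - 1/2^N \<le> snd z" for N z
    using that
  proof (induction N)
    case 0
    then show ?case by (simp add: HN0 fs0)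
  next
    case (Suc N)
    have "\<not> snd z \<le> 1 - 1/2^N" using Suc.prems pow_arith4[of N] by linarith
    moreover have "min 1 (2^(Suc N) * (snd z - 1) + 2) = (1::real)"
      using pow_arith2[OF Suc.prems(2)] by simp
    moreover have "fst z \<in> {0..1}" using Suc.prems by (auto simp: D_def)
    ultimately show ?case by (simp add: HNS K1)
  qed
  have H1: "continuous_map (top_of_set D) X (HN N)" for N
  proof (induction N)
    case 0
    show ?case unfolding HN0 D_def by (rule cm_comp_real[OF _ _ g]) (auto intro: continuous_intros)
  next
    case (Suc N)
    show ?case unfolding HNS
    proof (rule continuous_map_cases_le)
      show "continuous_map (top_of_set D) euclideanreal snd"
        unfolding continuous_map_iff_continuous by (intro continuous_intros)
      show "continuous_map (top_of_set D) euclideanreal (\<lambda>z. 1 - 1/2^N)"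
        unfolding continuous_map_iff_continuous by (intro continuous_intros)
      show "continuous_map (subtopology (top_of_set D) {x \<in> topspace (top_of_set D). snd x \<le> 1 - 1 / 2 ^ N}) X (HN N)"
        by (rule continuous_map_from_subtopology[OF Suc.IH])
      have e1: "subtopology (top_of_set D) {x \<in> topspace (top_of_set D). 1 - 1 / 2 ^ N \<le> snd x}
          = top_of_set {x \<in> D. 1 - 1 / 2 ^ N \<le> snd x}"
        by (simp add: subtopology_subtopology Int_absorb1 subset_eq)
      have "continuous_map (top_of_set {x \<in> D. 1 - 1 / 2 ^ N \<le> snd x}) X
          (\<lambda>z. Ks N (fst z, min 1 (2^(Suc N) * (snd z - 1) + 2)))"
      proof (rule cm_comp_real[OF _ _ Kcont])
        show "continuous_on {x \<in> D. 1 - 1 / 2 ^ N \<le> snd x} (\<lambda>z. (fst z, min 1 (2^(Suc N) * (snd z - 1) + (2::real))))"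
          by (intro continuous_intros)
        show "(\<lambda>z. (fst z, min 1 (2^(Suc N) * (snd z - 1) + (2::real)))) ` {x \<in> D. 1 - 1 / 2 ^ N \<le> snd x} \<subseteq> D"
          using pow_arith3 by (auto simp: D_def)
      qed
      then show "continuous_map (subtopology (top_of_set D) {x \<in> topspace (top_of_set D). 1 - 1 / 2 ^ N \<le> snd x}) X
          (\<lambda>z. Ks N (fst z, min 1 (2^(Suc N) * (snd z - 1) + 2)))"
        by (simp only: e1)
      fix z assume z: "z \<in> topspace (top_of_set D)" "snd z = 1 - 1 / 2 ^ N"
      then have "HN N z = fs N (fst z)" using H2[of z N] by simp
      moreover have "2^(Suc N) * (snd z - 1) + 2 = (0::real)" using z(2) pow_arith1[of N] by simp
      moreover have "fst z \<in> {0..1}" using z by (auto simp: D_def)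
      ultimately show "HN N z = Ks N (fst z, min 1 (2 ^ Suc N * (snd z - 1) + 2))" by (simp add: K0)
    qed
  qed
  have HNX: "HN N z \<in> topspace X" if "z \<in> D" for N z
    using H1[of N] that by (auto simp: continuous_map_def)
  have H3: "HN M z = HN N z" if z: "z \<in> D" and s: "snd z \<le> 1 - 1/2^N" and NM: "N \<le> M" for N M z
    using NM
  proof (induction M rule: dec_induct)
    case (step M)
    have "snd z \<le> 1 - 1/2^M" using s pow_arith5[OF step.hyps(1)] by linarith
    then show ?case using step.IH by (simp add: HNS)
  qed simp
  have H4: "mdist e (HN M z) (HN N z) \<le> bs N - bs M" if e: "e = m1 \<or> e = m2" and z: "z \<in> D" and NM: "N \<le> M" for e N M z
    using NM
  proof (induction M rule: dec_induct)
    case base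
    then show ?case using HNX[OF z, of N] spe[OF e] by simp
  next
    case (step M)
    show ?case
    proof (cases "snd z \<le> 1 - 1/2^M")
      case True
      then show ?thesis using step.IH bsle[of M] by (simp add: HNS)
    next
      case False
      have t: "fst z \<in> {0..1}" using z by (auto simp: D_def)
      have "1 - 1/2^N \<le> snd z" using False pow_arith5[OF step.hyps(1)] by linarith
      then have hn: "HN N z = fs N (fst z)" using H2[OF z] by simp
      have hm: "HN (Suc M) z = Ks M (fst z, min 1 (2^(Suc M) * (snd z - 1) + 2))"
        using False by (simp add: HNS)
      have sig: "min 1 (2^(Suc M) * (snd z - 1) + 2) \<in> {0..(1::real)}"
        using False pow_arith3[of M "snd z"] by auto
      have "mdist e (HN (Suc M) z) (HN N z) \<le> mdist e (HN (Suc M) z) (fs M (fst z)) + mdist e (fs M (fst z)) (fs N (fst z))"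
        unfolding hn using HNX[OF z] fX[OF t] spe[OF e] by (intro mdist_triangle) auto
      moreover have "mdist e (HN (Suc M) z) (fs M (fst z)) < bs M / 2"
        unfolding hm using Kde[OF e t sig] .
      moreover have "mdist e (fs M (fst z)) (fs N (fst z)) \<le> bs N - bs M"
        using fsdist[OF e step.hyps(1) t] by (simp add: mdist_commute)
      ultimately show ?thesis using bsdec[of M] by linarith
    qed
  qed
  define H where "H z = (if snd z < 1 then HN (LEAST N. snd z \<le> 1 - 1/2^N) z else finf (fst z))" for z
  have H6: "H z = HN N z" if z: "z \<in> D" and s: "snd z \<le> 1 - 1/2^N" for N z
  proof -
    have s1: "snd z < 1" using s by (smt (verit) zero_less_divide_1_iff zero_less_power)
    define L where "L = (LEAST N. snd z \<le> 1 - 1/2^N)"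
    have "L \<le> N" unfolding L_def using s by (rule Least_le)
    moreover have "snd z \<le> 1 - 1/2^L" unfolding L_def using s by (rule LeastI)
    ultimately have "HN N z = HN L z" using H3[OF z] by blast
    then show ?thesis using s1 by (simp add: H_def L_def)
  qed
  have HX: "H z \<in> topspace X" if z: "z \<in> D" for z
  proof (cases "snd z < 1")
    case True
    then show ?thesis using HNX[OF z] by (simp add: H_def)
  next
    case False
    then show ?thesis using finfX z by (auto simp: H_def D_def)
  qed
  have H7: "mdist e (H z) (HN N z) \<le> bs N" if e: "e = m1 \<or> e = m2" and z: "z \<in> D" for e N z
  proof (cases "snd z \<le> 1 - 1/2^N")
    case True
    then show ?thesis using H6[OF z True] HNX[OF z, of N] spe[OF e] bpos[of N] by simp
  next
    case False
    then have sN: "1 - 1/2^N \<le> snd z" by simp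
    have t: "fst z \<in> {0..1}" using z by (auto simp: D_def)
    have hn: "HN N z = fs N (fst z)" using H2[OF z sN] .
    show ?thesis
    proof (cases "snd z < 1")
      case True
      then obtain M0 where "snd z \<le> 1 - 1/2^M0" using pow_ex by blast
      then have sM: "snd z \<le> 1 - 1/2^(max N M0)" using pow_arith5[of M0 "max N M0"] by simp
      have "H z = HN (max N M0) z" using H6[OF z sM] .
      then show ?thesis using H4[OF e z, of N "max N M0"] bpos[of "max N M0"] by simp
    next
      case False
      then have "H z = finf (fst z)" by (simp add: H_def)
      then show ?thesis using finf_dist[OF e t, of N] hn by (simp add: mdist_commute)
    qed
  qed
  have Hc: "continuous_map (top_of_set D) X H"
  proof -
    have "continuous_map (top_of_set D) M2.mtopology H"
    proof (rule M2.continuous_map_uniform_limit[where F=sequentially and f=HN])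
      show "\<forall>\<^sub>F n in sequentially. continuous_map (top_of_set D) M2.mtopology (HN n)"
        using H1 by (simp add: M2top)
      fix \<epsilon> :: real assume "\<epsilon> > 0"
      then obtain N where N: "\<forall>n\<ge>N. bs n < \<epsilon>" using bssmall by blast
      show "\<forall>\<^sub>F n in sequentially. \<forall>x\<in>topspace (top_of_set D). H x \<in> mspace m2 \<and> mdist m2 (HN n x) (H x) < \<epsilon>"
        unfolding eventually_sequentially
      proof (intro exI[of _ N] allI impI ballI conjI)
        fix n x assume n: "N \<le> n" and x: "x \<in> topspace (top_of_set D)"
        then show "H x \<in> mspace m2" using HX sp2 by simp
        show "mdist m2 (HN n x) (H x) < \<epsilon>" using H7[of m2 x n] x N n
          by (simp add: mdist_commute) (meson le_less_trans)
      qed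
    qed simp
    then show ?thesis by (simp add: M2top)
  qed
  show ?thesis
  proof (intro exI[of _ finf] exI[of _ H] conjI ballI)
    show "continuous_map (prod_topology (top_of_set {0..1::real}) (top_of_set {0..1::real})) X H"
      using Hc by (simp add: D_def)
    show "continuous_map (top_of_set {0..1::real}) X finf"
    proof -
      have "continuous_map (top_of_set {0..1::real}) X (\<lambda>t. H (t, 1))"
        by (rule cm_comp_real[OF _ _ Hc]) (auto simp: D_def intro: continuous_intros)
      moreover have "H (t, 1) = finf t" for t by (simp add: H_def)
      ultimately show ?thesis by simp
    qed
    show "zero_dim_map (top_of_set {0..1::real}) finf" by (rule zd)
    fix t :: real assume t: "t \<in> {0..1}"
    have z0: "(t,0) \<in> D" using t by (simp add: D_def)
    show "H (t,0) = g t" using H6[OF z0, of 0] by (simp add: HN0)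
    show "H (t,1) = finf t" by (simp add: H_def)
    fix s :: real assume s: "s \<in> {0..1}"
    have zs: "(t,s) \<in> D" using t s by (simp add: D_def)
    show "mdist m1 (H (t,s)) (g t) \<le> b0" using H7[of m1 "(t,s)" 0] zs by (simp add: HN0 bs0)
  qed
qed


theorem proposition6p2:
  fixes X :: "'a topology"
  assumes "completely_metrizable_space X"
    and "DD_property X 0 0"
  shows "\<forall>m. mtopology_of m = X \<longrightarrow> AP_1_0 m"
proof (intro allI impI)
  fix m :: "'a metric"
  assume X1: "mtopology_of m = X"
  obtain M d where ms: "Metric_space M d" and mc: "Metric_space.mcomplete M d"
    and XM: "X = Metric_space.mtopology M d"
    using assms(1) unfolding completely_metrizable_space_def by blast
  define m2 where "m2 = metric (M, d)"
  have X2: "mtopology_of m2 = X" using Metric_space.mtopology_of[OF ms] XM by (simp add: m2_def)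
  have comp: "mcomplete_of m2" using Metric_space.mcomplete_of[OF ms] mc by (simp add: m2_def)
  have sp1: "mspace m = topspace X" using X1 by auto
  show "AP_1_0 m"
    unfolding AP_1_0_def
  proof (intro allI impI)
    fix \<epsilon> :: real and g :: "real \<Rightarrow> 'a"
    assume \<epsilon>: "\<epsilon> > 0" and g: "continuous_map (top_of_set {0..1::real}) (mtopology_of m) g"
    have b0: "\<epsilon>/4 > 0" using \<epsilon> by simp
    obtain g' H where g': "continuous_map (top_of_set {0..1::real}) X g'"
      and zd: "zero_dim_map (top_of_set {0..1::real}) g'"
      and Hc: "continuous_map (prod_topology (top_of_set {0..1::real}) (top_of_set {0..1::real})) X H"
      and H01: "\<forall>t\<in>{0..1}. H (t,0) = g t \<and> H (t,1) = g' t"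
      and Hd: "\<forall>t\<in>{0..1}. \<forall>s\<in>{0..1}. mdist m (H (t,s)) (g t) \<le> \<epsilon>/4"
      using main_construction[OF assms(2) X1 X2 comp g[unfolded X1] b0] by blast
    have HX: "H (t,s) \<in> mspace m" if "t \<in> {0..1}" "s \<in> {0..1}" for t s
      using Hc that sp1 by (auto simp: continuous_map_def)
    have gX: "g t \<in> mspace m" if "t \<in> {0..1}" for t
      using g that by (auto simp: continuous_map_def)
    have diam: "mdiam m ((\<lambda>s. H (t, s)) ` {0..1}) < \<epsilon>" if t: "t \<in> {0..1}" for t
    proof -
      have "mdiam m ((\<lambda>s. H (t, s)) ` {0..1}) \<le> \<epsilon>/2"
        unfolding mdiam_def
      proof (rule cSup_least)
        show "{mdist m x y |x y. x \<in> (\<lambda>s. H (t, s)) ` {0..1} \<and> y \<in> (\<lambda>s. H (t, s)) ` {0..1}} \<noteq> {}"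
        proof -
          have "H (t,0) \<in> (\<lambda>s. H (t, s)) ` {0..1}" by (rule image_eqI[of _ _ 0]) auto
          then show ?thesis by blast
        qed
        fix r assume "r \<in> {mdist m x y |x y. x \<in> (\<lambda>s. H (t, s)) ` {0..1} \<and> y \<in> (\<lambda>s. H (t, s)) ` {0..1}}"
        then obtain s1 s2 where s: "s1 \<in> {0..1}" "s2 \<in> {0..1}" and r: "r = mdist m (H (t,s1)) (H (t,s2))"
          by blast
        have "r \<le> mdist m (H (t,s1)) (g t) + mdist m (g t) (H (t,s2))"
          unfolding r using HX t s gX by (intro mdist_triangle) auto
        also have "\<dots> \<le> \<epsilon>/4 + \<epsilon>/4" using Hd t s by (intro add_mono) (auto simp: mdist_commute)
        finally show "r \<le> \<epsilon>/2" by simp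
      qed
      then show ?thesis using \<epsilon> by simp
    qed
    have 1: "continuous_map (top_of_set {0..1::real}) (mtopology_of m) g'" using g' X1 by simp
    have 2: "zero_dim_map (top_of_set {0..1::real}) g'" by (rule zd)
    have 3: "continuous_map (prod_topology (top_of_set {0..1::real}) (top_of_set {0..1::real})) (mtopology_of m) H"
        using Hc X1 by simp
    have 4: "\<forall>t\<in>{0..1}. H (t, 0) = g t \<and> H (t, 1) = g' t" by (rule H01)
    have 5: "\<forall>t\<in>{0..1::real}. mdiam m ((\<lambda>s. H (t, s)) ` {0..1}) < \<epsilon>" using diam by blast
    show "\<exists>g' (h :: real \<times> real \<Rightarrow> 'a). continuous_map (top_of_set {0..1}) (mtopology_of m) g' \<and>
               zero_dim_map (top_of_set {0..1}) g' \<and>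
               continuous_map (prod_topology (top_of_set {0..1}) (top_of_set {0..1})) (mtopology_of m) h \<and>
               (\<forall>t\<in>{0..1}. h (t, 0) = g t \<and> h (t, 1) = g' t) \<and>
               (\<forall>t\<in>{0..1}. mdiam m ((\<lambda>s. h (t, s)) ` {0..1}) < \<epsilon>)"
      using 1 2 3 4 5 by blast
  qed
qed

end
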